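(* Let $\mathcal{D}$ be a set equipped with a finite (nonnegative) measure $\mu$, and let $f,g:\mathcal{D}\to\mathbb{R}$ be bounded measurable functions. Let $\lambda$ denote the product of $\mu$ with Lebesgue measure on $\mathbb{R}$, a measure on $\mathcal{D}\times\mathbb{R}$. For a bounded measurable $h:\mathcal{D}\to\mathbb{R}$ put $$A_h=\{(x,y)\in\mathcal{D}\times\mathbb{R} : 0\le y\le h(x)\}\ \cup\ \{(x,y)\in\mathcal{D}\times\mathbb{R} : h(x)\le y<0\}.$$ Then the intersection kernel satisfies $$\kappa_{\cap}(f,g):=\lambda(A_f\cap A_g)=\tfrac12\big(\|f\|_{1_\mu}+\|g\|_{1_\mu}-\|f-g\|_{1_\mu}\big)=\int_{\{x:\min(f(x),g(x))\ge 0\}}\min(f(x),g(x))\,d\mu(x)-\int_{\{x:\max(f(x),g(x))<0\}}\max(f(x),g(x))\,d\mu(x),$$ and, provided $\lambda(A_f\cup A_g)\neq 0$, the Tanimoto kernel satisfies $$\kappa_{tanimoto}(f,g):=\frac{\lambda(A_f\cap A_g)}{\lambda(A_f\cup A_g)}=\frac{\tfrac12\big(\|f\|_{1_\mu}+\|g\|_{1_\mu}-\|f-g\|_{1_\mu}\big)}{\tfrac12\big(\|f\|_{1_\mu}+\|g\|_{1_\mu}+\|f-g\|_{1_\mu}\big)} =\frac{\int_{\{\min(f,g)\ge 0\}}\min(f,g)\,d\mu-\int_{\{\max(f,g)<0\}}\max(f,g)\,d\mu}{\int_{\{\max(f,g)\ge 0\}}\max(f,g)\,d\mu-\int_{\{\min(f,g)<0\}}\min(f,g)\,d\mu},$$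 where $\min(f,g)$ and $\max(f,g)$ denote pointwise minimum and maximum.
   Context: For a measurable $h:\mathcal{D}\to\mathbb{R}$, $\|h\|_{1_\mu}=\int_{\mathcal{D}}|h(x)|\,d\mu(x)$. The set $A_h$ is the region between the graph of $h$ and the $x$-axis: the part above the axis where $h\ge0$ and the part below the axis where $h<0$. *)

theory Defs
  imports "HOL-Analysis.Analysis"
begin

definition region :: "'a measure \<Rightarrow> ('a \<Rightarrow> real) \<Rightarrow> ('a \<times> real) set" where
  "region M h = {(x, y). x \<in> space M \<and> 0 \<le> y \<and> y \<le> h x}
              \<union> {(x, y). x \<in> space M \<and> h x \<le> y \<and> y < 0}"

definition L1norm :: "'a measure \<Rightarrow> ('a \<Rightarrow> real) \<Rightarrow> real" where
  "L1norm M h = (\<integral>x. \<bar>h x\<bar> \<partial>M)"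

definition kappa_cap :: "'a measure \<Rightarrow> ('a \<Rightarrow> real) \<Rightarrow> ('a \<Rightarrow> real) \<Rightarrow> real" where
  "kappa_cap M f g = measure (M \<Otimes>\<^sub>M lborel) (region M f \<inter> region M g)"

definition kappa_tanimoto :: "'a measure \<Rightarrow> ('a \<Rightarrow> real) \<Rightarrow> ('a \<Rightarrow> real) \<Rightarrow> real" where
  "kappa_tanimoto M f g = measure (M \<Otimes>\<^sub>M lborel) (region M f \<inter> region M g)
                        / measure (M \<Otimes>\<^sub>M lborel) (region M f \<union> region M g)"

end

theory Submission imports Defs begin

lemma region_sets:
  assumes "h \<in> borel_measurable M"
  shows "region M h \<in> sets (M \<Otimes>\<^sub>M lborel)"
proof -
  have "region M h = {p \<in> space (M \<Otimes>\<^sub>M lborel). 0 \<le> snd p \<and> snd p \<le> h (fst p)}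
     \<union> {p \<in> space (M \<Otimes>\<^sub>M lborel). h (fst p) \<le> snd p \<and> snd p < 0}"
    by (auto simp: region_def space_pair_measure)
  also have "\<dots> \<in> sets (M \<Otimes>\<^sub>M lborel)" using assms by measurable
  finally show ?thesis .
qed

lemma measure_slices:
  assumes S: "S \<in> sets (M \<Otimes>\<^sub>M lborel)"
    and sl: "\<And>x. x \<in> space M \<Longrightarrow> emeasure lborel (Pair x -` S) = ennreal (c x)"
    and c: "integrable M c" "\<And>x. x \<in> space M \<Longrightarrow> 0 \<le> c x"
  shows "measure (M \<Otimes>\<^sub>M lborel) S = (\<integral>x. c x \<partial>M)"
proof -
  have "emeasure (M \<Otimes>\<^sub>M lborel) S = (\<integral>\<^sup>+x. emeasure lborel (Pair x -` S) \<partial>M)"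
    by (rule lborel.emeasure_pair_measure_alt[OF S])
  also have "\<dots> = (\<integral>\<^sup>+x. ennreal (c x) \<partial>M)"
    by (rule nn_integral_cong) (simp add: sl)
  also have "\<dots> = ennreal (\<integral>x. c x \<partial>M)"
    by (rule nn_integral_eq_integral[OF c(1)]) (simp add: c(2))
  finally show ?thesis
    by (simp add: measure_def integral_nonneg c(2))
qed

lemma slice_cap:
  "x \<in> space M \<Longrightarrow> emeasure lborel (Pair x -` (region M f \<inter> region M g))
     = ennreal ((\<bar>f x\<bar> + \<bar>g x\<bar> - \<bar>f x - g x\<bar>) / 2)"
proof -
  assume x: "x \<in> space M"
  have e: "Pair x -` (region M f \<inter> region M g) =
     (if f x \<ge> 0 \<and> g x \<ge> 0 then {0..min (f x) (g x)} else if f x < 0 \<and> g x < 0 then {max (f x) (g x)..<0} else {})"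
    using x by (auto simp: region_def)
  show ?thesis unfolding e by (auto simp: abs_if)
qed

lemma slice_cup:
  "x \<in> space M \<Longrightarrow> emeasure lborel (Pair x -` (region M f \<union> region M g))
     = ennreal ((\<bar>f x\<bar> + \<bar>g x\<bar> + \<bar>f x - g x\<bar>) / 2)"
proof -
  assume x: "x \<in> space M"
  have e: "Pair x -` (region M f \<union> region M g) =
     (if f x \<ge> 0 \<and> g x \<ge> 0 then {0..max (f x) (g x)} else if f x < 0 \<and> g x < 0 then {min (f x) (g x)..<0} else {min (f x) (g x) .. max (f x) (g x)})"
    using x by (auto simp: region_def)
  show ?thesis unfolding e by (auto simp: abs_if max_def min_def)
qed

lemma bnd_int:
  fixes h :: "'a \<Rightarrow> real"
  assumes "finite_measure M" "h \<in> borel_measurable M" "\<And>x. x \<in> space M \<Longrightarrow> \<bar>h x\<bar> \<le> B"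
  shows "integrable M h"
  using finite_measure.integrable_const_bound[OF assms(1), of h B] assms(2,3) by auto

theorem proposition2:
  fixes M :: "'a measure" and f g :: "'a \<Rightarrow> real"
  assumes "finite_measure M"
    and "f \<in> borel_measurable M" and "g \<in> borel_measurable M"
    and "bounded (f ` space M)" and "bounded (g ` space M)"
  shows "kappa_cap M f g = (L1norm M f + L1norm M g - L1norm M (\<lambda>x. f x - g x)) / 2
       \<and> kappa_cap M f g =
           (\<integral>x \<in> {x \<in> space M. min (f x) (g x) \<ge> 0}. min (f x) (g x) \<partial>M)
         - (\<integral>x \<in> {x \<in> space M. max (f x) (g x) < 0}. max (f x) (g x) \<partial>M)
       \<and> (measure (M \<Otimes>\<^sub>M lborel) (region M f \<union> region M g) \<noteq> 0 \<longrightarrow>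
            kappa_tanimoto M f g =
              ((L1norm M f + L1norm M g - L1norm M (\<lambda>x. f x - g x)) / 2)
              / ((L1norm M f + L1norm M g + L1norm M (\<lambda>x. f x - g x)) / 2)
          \<and> kappa_tanimoto M f g =
              ((\<integral>x \<in> {x \<in> space M. min (f x) (g x) \<ge> 0}. min (f x) (g x) \<partial>M)
               - (\<integral>x \<in> {x \<in> space M. max (f x) (g x) < 0}. max (f x) (g x) \<partial>M))
              / ((\<integral>x \<in> {x \<in> space M. max (f x) (g x) \<ge> 0}. max (f x) (g x) \<partial>M)
               - (\<integral>x \<in> {x \<in> space M. min (f x) (g x) < 0}. min (f x) (g x) \<partial>M)))"
proof -
  note fm = assms(1)
  note [measurable] = assms(2,3)
  obtain Bf where Bf: "\<And>x. x \<in> space M \<Longrightarrow> \<bar>f x\<bar> \<le> Bf"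
    using assms(4) unfolding bounded_iff by auto
  obtain Bg where Bg: "\<And>x. x \<in> space M \<Longrightarrow> \<bar>g x\<bar> \<le> Bg"
    using assms(5) unfolding bounded_iff by auto
  define B where "B = Bf + Bg"
  have bx: "\<bar>f x\<bar> \<le> B" "\<bar>g x\<bar> \<le> B" "\<bar>f x - g x\<bar> \<le> B" if "x \<in> space M" for x
    using Bf[OF that] Bg[OF that] unfolding B_def by auto
  have iF: "integrable M (\<lambda>x. \<bar>f x\<bar>)" "integrable M (\<lambda>x. \<bar>g x\<bar>)" "integrable M (\<lambda>x. \<bar>f x - g x\<bar>)"
    by (rule bnd_int[OF fm, where B=B]; use bx in auto)+
  have i1: "integrable M (\<lambda>x. indicator {x \<in> space M. min (f x) (g x) \<ge> 0} x *\<^sub>R min (f x) (g x))"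
    apply (rule bnd_int[OF fm, where B=B])
    apply measurable
    subgoal for x using bx[of x] by (auto simp: indicator_def min_def)
    done
  have i2: "integrable M (\<lambda>x. indicator {x \<in> space M. max (f x) (g x) < 0} x *\<^sub>R max (f x) (g x))"
    apply (rule bnd_int[OF fm, where B=B])
    apply measurable
    subgoal for x using bx[of x] by (auto simp: indicator_def max_def)
    done
  have i3: "integrable M (\<lambda>x. indicator {x \<in> space M. max (f x) (g x) \<ge> 0} x *\<^sub>R max (f x) (g x))"
    apply (rule bnd_int[OF fm, where B=B])
    apply measurable
    subgoal for x using bx[of x] by (auto simp: indicator_def max_def)
    done
  have i4: "integrable M (\<lambda>x. indicator {x \<in> space M. min (f x) (g x) < 0} x *\<^sub>R min (f x) (g x))"
    apply (rule bnd_int[OF fm, where B=B])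
    apply measurable
    subgoal for x using bx[of x] by (auto simp: indicator_def min_def)
    done
  define c where "c x = (\<bar>f x\<bar> + \<bar>g x\<bar> - \<bar>f x - g x\<bar>) / 2" for x
  define u where "u x = (\<bar>f x\<bar> + \<bar>g x\<bar> + \<bar>f x - g x\<bar>) / 2" for x
  have ic: "integrable M c" unfolding c_def using iF by auto
  have iu: "integrable M u" unfolding u_def using iF by auto
  have cap: "kappa_cap M f g = (\<integral>x. c x \<partial>M)"
    unfolding kappa_cap_def
    apply (rule measure_slices)
    apply (intro sets.Int region_sets assms)
    apply (simp only: slice_cap c_def)
    apply (rule ic)
    apply (simp add: c_def)
    done
  have cup: "measure (M \<Otimes>\<^sub>M lborel) (region M f \<union> region M g) = (\<integral>x. u x \<partial>M)"
    apply (rule measure_slices)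
    apply (intro sets.Un region_sets assms)
    apply (simp only: slice_cup u_def)
    apply (rule iu)
    apply (simp add: u_def)
    done
  have c1: "(\<integral>x. c x \<partial>M) = (L1norm M f + L1norm M g - L1norm M (\<lambda>x. f x - g x)) / 2"
    unfolding c_def L1norm_def using iF by simp
  have u1: "(\<integral>x. u x \<partial>M) = (L1norm M f + L1norm M g + L1norm M (\<lambda>x. f x - g x)) / 2"
    unfolding u_def L1norm_def using iF by simp
  have c2: "(\<integral>x. c x \<partial>M) = (\<integral>x \<in> {x \<in> space M. min (f x) (g x) \<ge> 0}. min (f x) (g x) \<partial>M)
         - (\<integral>x \<in> {x \<in> space M. max (f x) (g x) < 0}. max (f x) (g x) \<partial>M)"
    unfolding set_lebesgue_integral_def
    apply (subst Bochner_Integration.integral_diff[OF i1 i2, symmetric])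
    apply (rule Bochner_Integration.integral_cong[OF refl])
    apply (auto simp: c_def indicator_def min_def max_def abs_if)
    done
  have u2: "(\<integral>x. u x \<partial>M) = (\<integral>x \<in> {x \<in> space M. max (f x) (g x) \<ge> 0}. max (f x) (g x) \<partial>M)
         - (\<integral>x \<in> {x \<in> space M. min (f x) (g x) < 0}. min (f x) (g x) \<partial>M)"
    unfolding set_lebesgue_integral_def
    apply (subst Bochner_Integration.integral_diff[OF i3 i4, symmetric])
    apply (rule Bochner_Integration.integral_cong[OF refl])
    apply (auto simp: u_def indicator_def min_def max_def abs_if)
    done
  have tan: "kappa_tanimoto M f g = (\<integral>x. c x \<partial>M) / (\<integral>x. u x \<partial>M)"
    using cap cup unfolding kappa_tanimoto_def kappa_cap_def by simp
  have k1: "kappa_cap M f g = (L1norm M f + L1norm M g - L1norm M (\<lambda>x. f x - g x)) / 2"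
    unfolding cap c1 ..
  have k2: "kappa_cap M f g = (\<integral>x \<in> {x \<in> space M. min (f x) (g x) \<ge> 0}. min (f x) (g x) \<partial>M)
         - (\<integral>x \<in> {x \<in> space M. max (f x) (g x) < 0}. max (f x) (g x) \<partial>M)"
    unfolding cap c2 ..
  have t1: "kappa_tanimoto M f g = ((L1norm M f + L1norm M g - L1norm M (\<lambda>x. f x - g x)) / 2)
              / ((L1norm M f + L1norm M g + L1norm M (\<lambda>x. f x - g x)) / 2)"
    unfolding tan c1 u1 ..
  have t2: "kappa_tanimoto M f g =
              ((\<integral>x \<in> {x \<in> space M. min (f x) (g x) \<ge> 0}. min (f x) (g x) \<partial>M)
               - (\<integral>x \<in> {x \<in> space M. max (f x) (g x) < 0}. max (f x) (g x) \<partial>M))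
              / ((\<integral>x \<in> {x \<in> space M. max (f x) (g x) \<ge> 0}. max (f x) (g x) \<partial>M)
               - (\<integral>x \<in> {x \<in> space M. min (f x) (g x) < 0}. min (f x) (g x) \<partial>M))"
    unfolding tan c2 u2 ..
  show ?thesis using k1 k2 t1 t2 by blast
qed

end
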